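(* Let $E$ be a semi-Montel space, $G\subset E'$ a linear subspace that determines boundedness, $\Omega\subset\mathbb{R}^d$ open and $k\in\mathbb{N}$. If $f\colon\Omega\to E$ is such that $e'\circ f\in\mathcal{C}^k(\Omega)$ for all $e'\in G$, then $f\in\mathcal{C}^k(\Omega,E)$.
   Context: $\mathbb{K}\in\{\mathbb{R},\mathbb{C}\}$. A semi-Montel space is a locally convex Hausdorff space over $\mathbb{K}$ in which every bounded set is relatively compact. $G\subset E'$ determines boundedness if every $\sigma(E,G)$-bounded subset of $E$ is bounded in $E$. $f\colon\Omega\to E$ is $\mathcal{C}^1$ if for each unit vector $e_n$ the limit $(\partial^{e_n})^Ef(x)=\lim_{h\to0,h\in\mathbb{R}\setminus\{0\}}(f(x+he_n)-f(x))/h$ exists in $E$ for all $x\in\Omega$ and is continuous in $x$; $\mathcal{C}^k$ is defined inductively (f is $\mathcal{C}^1$ and all first partial derivatives are $\mathcal{C}^{k-1}$). $\mathcal{C}^k(\Omega)$ is the scalar case. *)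

theory Defs
  imports "HOL-Analysis.Analysis"
begin

text \<open>Scalar field: a type 'k of class real_normed_field (covers K = real and K = complex).
  A locally convex Hausdorff space over 'k is presented by a vector space structure
  (scalar multiplication smul) together with a separating family of seminorms P i, i in I;
  its topology is the one generated by the seminorms.\<close>

definition seminorm_on :: "('k::real_normed_field \<Rightarrow> 'e::ab_group_add \<Rightarrow> 'e) \<Rightarrow> ('e \<Rightarrow> real) \<Rightarrow> bool" where
  "seminorm_on smul p \<longleftrightarrow>
     (\<forall>x y. p (x + y) \<le> p x + p y) \<and> (\<forall>c x. p (smul c x) = norm c * p x)"

definition seminorm_topology :: "'i set \<Rightarrow> ('i \<Rightarrow> 'e::ab_group_add \<Rightarrow> real) \<Rightarrow> 'e topology" where
  "seminorm_topology I P = topology (\<lambda>U. \<forall>x\<in>U. \<exists>F e. finite F \<and> F \<subseteq> I \<and> 0 < e \<and>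
        {y. \<forall>i\<in>F. P i (y - x) < e} \<subseteq> U)"

definition lc_hausdorff :: "('k::real_normed_field \<Rightarrow> 'e::ab_group_add \<Rightarrow> 'e) \<Rightarrow> ('i \<Rightarrow> 'e \<Rightarrow> real) \<Rightarrow> bool" where
  "lc_hausdorff smul P \<longleftrightarrow> Vector_Spaces.vector_space smul \<and> (\<forall>i. seminorm_on smul (P i))
     \<and> (\<forall>x. x \<noteq> 0 \<longrightarrow> (\<exists>i. P i x \<noteq> 0))"

definition vN_bounded :: "('k::real_normed_field \<Rightarrow> 'e::ab_group_add \<Rightarrow> 'e) \<Rightarrow> 'e topology \<Rightarrow> 'e set \<Rightarrow> bool" where
  "vN_bounded smul T B \<longleftrightarrow>
     (\<forall>U. openin T U \<and> 0 \<in> U \<longrightarrow> (\<exists>r>0. \<forall>c. r \<le> norm c \<longrightarrow> B \<subseteq> smul c ` U))"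

definition semi_montel :: "('k::real_normed_field \<Rightarrow> 'e::ab_group_add \<Rightarrow> 'e) \<Rightarrow> ('i \<Rightarrow> 'e \<Rightarrow> real) \<Rightarrow> bool" where
  "semi_montel smul P \<longleftrightarrow> lc_hausdorff smul P \<and>
     (\<forall>B. vN_bounded smul (seminorm_topology UNIV P) B \<longrightarrow>
          compactin (seminorm_topology UNIV P) ((seminorm_topology UNIV P) closure_of B))"

definition top_dual :: "('k::real_normed_field \<Rightarrow> 'e::ab_group_add \<Rightarrow> 'e) \<Rightarrow> ('i \<Rightarrow> 'e \<Rightarrow> real) \<Rightarrow> ('e \<Rightarrow> 'k) set" where
  "top_dual smul P = {e'. (\<forall>x y. e' (x + y) = e' x + e' y) \<and> (\<forall>c x. e' (smul c x) = c * e' x)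
       \<and> continuous_map (seminorm_topology UNIV P) euclidean e'}"

definition linear_subspace_fun :: "('e \<Rightarrow> 'k::real_normed_field) set \<Rightarrow> bool" where
  "linear_subspace_fun G \<longleftrightarrow> (\<lambda>x. 0) \<in> G \<and> (\<forall>g\<in>G. \<forall>h\<in>G. (\<lambda>x. g x + h x) \<in> G)
      \<and> (\<forall>c. \<forall>g\<in>G. (\<lambda>x. c * g x) \<in> G)"

definition weak_topology_G :: "('e \<Rightarrow> 'k::real_normed_field) set \<Rightarrow> 'e::ab_group_add topology" where
  "weak_topology_G G = seminorm_topology G (\<lambda>g x. norm (g x))"

definition determines_boundedness :: "('k::real_normed_field \<Rightarrow> 'e::ab_group_add \<Rightarrow> 'e) \<Rightarrow> ('i \<Rightarrow> 'e \<Rightarrow> real) \<Rightarrow> ('e \<Rightarrow> 'k) set \<Rightarrow> bool" where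
  "determines_boundedness smul P G \<longleftrightarrow>
     (\<forall>B. vN_bounded smul (weak_topology_G G) B \<longrightarrow> vN_bounded smul (seminorm_topology UNIV P) B)"

definition has_partial_in :: "'e topology \<Rightarrow> ('k::real_normed_field \<Rightarrow> 'e::ab_group_add \<Rightarrow> 'e) \<Rightarrow>
     ('a::euclidean_space \<Rightarrow> 'e) \<Rightarrow> 'a \<Rightarrow> 'a \<Rightarrow> 'e \<Rightarrow> bool" where
  "has_partial_in T smul f b x l \<longleftrightarrow>
     limitin T (\<lambda>h::real. smul (of_real (1 / h)) (f (x + h *\<^sub>R b) - f x)) l (at 0)"

definition partial_in :: "'e topology \<Rightarrow> ('k::real_normed_field \<Rightarrow> 'e::ab_group_add \<Rightarrow> 'e) \<Rightarrow>
     ('a::euclidean_space \<Rightarrow> 'e) \<Rightarrow> 'a \<Rightarrow> 'a \<Rightarrow> 'e" where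
  "partial_in T smul f b x = (SOME l. has_partial_in T smul f b x l)"

fun Ck_on :: "'e topology \<Rightarrow> ('k::real_normed_field \<Rightarrow> 'e::ab_group_add \<Rightarrow> 'e) \<Rightarrow>
     'a::euclidean_space set \<Rightarrow> nat \<Rightarrow> ('a \<Rightarrow> 'e) \<Rightarrow> bool" where
  "Ck_on T smul \<Omega> 0 f \<longleftrightarrow> continuous_map (top_of_set \<Omega>) T f"
| "Ck_on T smul \<Omega> (Suc k) f \<longleftrightarrow>
     (\<forall>b\<in>Basis. (\<forall>x\<in>\<Omega>. \<exists>l. has_partial_in T smul f b x l)
        \<and> Ck_on T smul \<Omega> k (partial_in T smul f b))"

abbreviation Ck_scalar :: "'a::euclidean_space set \<Rightarrow> nat \<Rightarrow> ('a \<Rightarrow> 'k::real_normed_field) \<Rightarrow> bool" where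
  "Ck_scalar \<Omega> k g \<equiv> Ck_on euclidean (*) \<Omega> k g"

end

theory Submission
  imports Defs
begin

lemma cluster_pt:
  assumes K: "compactin X K" and F: "F \<noteq> bot" and ev: "eventually (\<lambda>t. q t \<in> K) F"
  shows "\<exists>l\<in>K. \<forall>A. eventually (\<lambda>t. t \<in> A) F \<longrightarrow> l \<in> X closure_of (q ` A)"
proof -
  let ?U = "(\<lambda>A. X closure_of (q ` A)) ` {A. eventually (\<lambda>t. t \<in> A) F}"
  have "K \<inter> \<Inter>?U \<noteq> {}"
  proof (rule K[unfolded compactin_fip, THEN conjunct2, rule_format], intro conjI allI impI)
    show "\<forall>C\<in>?U. closedin X C" by auto
  next
    fix \<F> assume "finite \<F> \<and> \<F> \<subseteq> ?U"
    then obtain \<A> where A: "finite \<A>" "\<A> \<subseteq> {A. eventually (\<lambda>t. t \<in> A) F}" "\<F> = (\<lambda>A. X closure_of (q ` A)) ` \<A>"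
      by (meson finite_subset_image)
    have "eventually (\<lambda>t. \<forall>A\<in>\<A>. t \<in> A) F"
      using A by (auto intro: eventually_ball_finite)
    with ev have "eventually (\<lambda>t. q t \<in> K \<and> (\<forall>A\<in>\<A>. t \<in> A)) F"
      by (auto elim: eventually_elim2)
    then obtain t where t: "q t \<in> K" "\<forall>A\<in>\<A>. t \<in> A"
      using F eventually_happens' by blast
    have qt: "q t \<in> topspace X" using t K compactin_subset_topspace by blast
    have "q t \<in> \<Inter>\<F>"
      using t qt A(3) by (auto intro!: in_closure_of[THEN iffD2])
    then show "K \<inter> \<Inter>\<F> \<noteq> {}" using t by blast
  qed
  then show ?thesis by blast
qed

lemma cluster_val:
  fixes g :: "'e \<Rightarrow> 'k::real_normed_vector"
  assumes cl: "\<forall>A. eventually (\<lambda>t. t \<in> A) F \<longrightarrow> l \<in> X closure_of (q ` A)"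
    and cont: "continuous_map X euclidean g"
    and lim: "((\<lambda>t. g (q t)) \<longlongrightarrow> L) F"
  shows "g l = L"
proof (rule ccontr)
  assume ne: "g l \<noteq> L"
  define e where "e = dist (g l) L / 2"
  have e: "e > 0" using ne by (simp add: e_def)
  let ?A = "{t. dist (g (q t)) L < e}"
  have "eventually (\<lambda>t. t \<in> ?A) F" using lim e by (simp add: tendsto_iff)
  then have "l \<in> X closure_of (q ` ?A)" using cl by blast
  then have "g l \<in> euclidean closure_of (g ` q ` ?A)"
    using continuous_map_image_closure_subset[OF cont] by blast
  also have "\<dots> \<subseteq> cball L e"
  proof -
    have "closure (g ` q ` ?A) \<subseteq> cball L e"
      by (rule closure_minimal) (auto simp: dist_commute)
    then show ?thesis by simp
  qed
  finally have "dist (g l) L \<le> e" by (simp add: dist_commute)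
  then show False using e e_def by simp
qed

lemma limit_G:
  fixes G :: "('e \<Rightarrow> 'k::real_normed_vector) set"
  assumes K: "compactin X K" and F: "F \<noteq> bot" and ev: "eventually (\<lambda>t. q t \<in> K) F"
    and cont: "\<forall>g\<in>G. continuous_map X euclidean g"
    and lim: "\<forall>g\<in>G. ((\<lambda>t. g (q t)) \<longlongrightarrow> L g) F"
    and top: "topspace X = UNIV"
    and sep: "\<forall>x y. x \<in> topspace X \<longrightarrow> y \<in> topspace X \<longrightarrow> (\<forall>g\<in>G. g x = g y) \<longrightarrow> x = y"
  shows "\<exists>l. limitin X q l F \<and> (\<forall>g\<in>G. g l = L g)"
proof -
  obtain l where l: "l \<in> K" "\<forall>A. eventually (\<lambda>t. t \<in> A) F \<longrightarrow> l \<in> X closure_of (q ` A)"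
    using cluster_pt[OF K F ev] by blast
  have gl: "\<forall>g\<in>G. g l = L g" using cluster_val[OF l(2)] cont lim by blast
  have ltop: "l \<in> topspace X" using l K compactin_subset_topspace by blast
  have "limitin X q l F"
    unfolding limitin_def
  proof (intro conjI ltop allI impI)
    fix V assume V: "openin X V \<and> l \<in> V"
    show "eventually (\<lambda>t. q t \<in> V) F"
    proof (rule ccontr)
      assume nev: "\<not> eventually (\<lambda>t. q t \<in> V) F"
      let ?F = "inf F (principal {t. q t \<notin> V})"
      have F': "?F \<noteq> bot"
        using nev by (simp add: trivial_limit_def eventually_inf_principal)
      have ev': "eventually (\<lambda>t. q t \<in> K) ?F"
        using ev by (simp add: eventually_inf_principal eventually_mono)
      obtain l' where l': "l' \<in> K" "\<forall>A. eventually (\<lambda>t. t \<in> A) ?F \<longrightarrow> l' \<in> X closure_of (q ` A)"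
        using cluster_pt[OF K F' ev'] by blast
      have lim': "\<forall>g\<in>G. ((\<lambda>t. g (q t)) \<longlongrightarrow> L g) ?F"
        using lim by (auto intro: tendsto_mono[OF inf_le1])
      have gl': "\<forall>g\<in>G. g l' = L g" using cluster_val[OF l'(2)] cont lim' by blast
      have ltop': "l' \<in> topspace X" using l' K compactin_subset_topspace by blast
      have "eventually (\<lambda>t. t \<in> {t. q t \<notin> V}) ?F"
        by (simp add: eventually_inf_principal)
      then have "l' \<in> X closure_of (q ` {t. q t \<notin> V})" using l' by blast
      also have "\<dots> \<subseteq> topspace X - V"
        using V by (intro closure_of_minimal) (auto simp: top closedin_def double_diff)
      finally have "l' \<notin> V" by blast
      moreover have "l' = l" using sep ltop ltop' gl gl' by metis
      ultimately show False using V by blast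
    qed
  qed
  then show ?thesis using gl by blast
qed

lemma openin_snt:
  "openin (seminorm_topology I P) U \<longleftrightarrow>
    (\<forall>x\<in>U. \<exists>F e. finite F \<and> F \<subseteq> I \<and> 0 < e \<and> {y. \<forall>i\<in>F. P i (y - x) < e} \<subseteq> U)"
proof -
  have "istopology (\<lambda>U. \<forall>x\<in>U. \<exists>F e. finite F \<and> F \<subseteq> I \<and> 0 < e \<and> {y. \<forall>i\<in>F. P i (y - x) < e} \<subseteq> U)"
    unfolding istopology_def
  proof (intro conjI allI impI)
    fix S T assume S: "\<forall>x\<in>S. \<exists>F e. finite F \<and> F \<subseteq> I \<and> 0 < e \<and> {y. \<forall>i\<in>F. P i (y - x) < e} \<subseteq> S"
      and T: "\<forall>x\<in>T. \<exists>F e. finite F \<and> F \<subseteq> I \<and> 0 < e \<and> {y. \<forall>i\<in>F. P i (y - x) < e} \<subseteq> T"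
    show "\<forall>x\<in>S \<inter> T. \<exists>F e. finite F \<and> F \<subseteq> I \<and> 0 < e \<and> {y. \<forall>i\<in>F. P i (y - x) < e} \<subseteq> S \<inter> T"
    proof
      fix x assume x: "x \<in> S \<inter> T"
      obtain F1 e1 where 1: "finite F1" "F1 \<subseteq> I" "0 < e1" "{y. \<forall>i\<in>F1. P i (y - x) < e1} \<subseteq> S"
        using S x by (meson IntD1)
      obtain F2 e2 where 2: "finite F2" "F2 \<subseteq> I" "0 < e2" "{y. \<forall>i\<in>F2. P i (y - x) < e2} \<subseteq> T"
        using T x by (meson IntD2)
      show "\<exists>F e. finite F \<and> F \<subseteq> I \<and> 0 < e \<and> {y. \<forall>i\<in>F. P i (y - x) < e} \<subseteq> S \<inter> T"
      proof (intro exI conjI)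
        show "finite (F1 \<union> F2)" "F1 \<union> F2 \<subseteq> I" "0 < min e1 e2" using 1 2 by auto
        have "{y. \<forall>i\<in>F1 \<union> F2. P i (y - x) < min e1 e2} \<subseteq> {y. \<forall>i\<in>F1. P i (y - x) < e1}" by auto
        moreover have "{y. \<forall>i\<in>F1 \<union> F2. P i (y - x) < min e1 e2} \<subseteq> {y. \<forall>i\<in>F2. P i (y - x) < e2}" by auto
        ultimately show "{y. \<forall>i\<in>F1 \<union> F2. P i (y - x) < min e1 e2} \<subseteq> S \<inter> T" using 1(4) 2(4) by (meson Int_greatest order_trans)
      qed
    qed
  next
    fix K assume K: "\<forall>S\<in>K. \<forall>x\<in>S. \<exists>F e. finite F \<and> F \<subseteq> I \<and> 0 < e \<and> {y. \<forall>i\<in>F. P i (y - x) < e} \<subseteq> S"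
    show "\<forall>x\<in>\<Union>K. \<exists>F e. finite F \<and> F \<subseteq> I \<and> 0 < e \<and> {y. \<forall>i\<in>F. P i (y - x) < e} \<subseteq> \<Union>K"
    proof
      fix x assume "x \<in> \<Union>K"
      then obtain S where S: "S \<in> K" "x \<in> S" by blast
      obtain F e where Fe: "finite F" "F \<subseteq> I" "0 < e" "{y. \<forall>i\<in>F. P i (y - x) < e} \<subseteq> S"
        using K S by meson
      have "S \<subseteq> \<Union>K" using S by blast
      then show "\<exists>F e. finite F \<and> F \<subseteq> I \<and> 0 < e \<and> {y. \<forall>i\<in>F. P i (y - x) < e} \<subseteq> \<Union>K"
        using Fe by (intro exI[of _ F] exI[of _ e] conjI) auto
    qed
  qed
  then show ?thesis unfolding seminorm_topology_def by simp
qed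

lemma topspace_snt [simp]: "topspace (seminorm_topology I P) = UNIV"
proof -
  have "openin (seminorm_topology I P) UNIV"
    unfolding openin_snt by (rule ballI, rule exI[of _ "{}"], rule exI[of _ "1::real"]) simp
  then show ?thesis by (simp add: openin_subset subset_antisym)
qed


lemma lc_module: "lc_hausdorff smul P \<Longrightarrow> module smul"
  by (simp add: lc_hausdorff_def module_iff_vector_space)

lemma sn_facts:
  assumes "lc_hausdorff smul P"
  shows "P i 0 = 0" "P i x \<ge> 0" "P i (smul c x) = norm c * P i x" "P i z \<le> P i (z - y) + P i y"
proof -
  interpret module smul using lc_module[OF assms] .
  have sn: "seminorm_on smul (P i)" using assms by (simp add: lc_hausdorff_def)
  have hom: "\<And>c x. P i (smul c x) = norm c * P i x" and tri: "\<And>x y. P i (x + y) \<le> P i x + P i y"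
    using sn by (auto simp: seminorm_on_def)
  show "P i 0 = 0" using hom[of 0 0] by simp
  show "P i (smul c x) = norm c * P i x" by (rule hom)
  have "P i (z - y + y) \<le> P i (z - y) + P i y" by (rule tri)
  then show "P i z \<le> P i (z - y) + P i y" by simp
  have m: "P i (- x) = P i x" using hom[of "-1" x] by simp
  have "P i (x + - x) \<le> P i x + P i (- x)" by (rule tri)
  then show "P i x \<ge> 0" using hom[of 0 0] m by simp
qed

lemma dual_facts:
  assumes "g \<in> top_dual smul P"
  shows "g (x - y) = g x - g y" "g (smul c x) = c * g x"
    "continuous_map (seminorm_topology UNIV P) euclidean g"
proof -
  have add: "\<And>x y. g (x + y) = g x + g y" using assms by (simp add: top_dual_def)
  have "g (x - y + y) = g (x - y) + g y" by (rule add)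
  then show "g (x - y) = g x - g y" by simp
  show "g (smul c x) = c * g x" "continuous_map (seminorm_topology UNIV P) euclidean g"
    using assms by (auto simp: top_dual_def)
qed

lemma weak_bdd:
  fixes G :: "('e::ab_group_add \<Rightarrow> 'k::real_normed_field) set"
  assumes md: "module smul" and GD: "G \<subseteq> top_dual smul P"
    and bd: "\<forall>g\<in>G. \<exists>M. \<forall>y\<in>B. norm (g y) \<le> M"
  shows "vN_bounded smul (weak_topology_G G) B"
  unfolding vN_bounded_def
proof (intro allI impI)
  interpret module smul using md .
  fix U assume U: "openin (weak_topology_G G) U \<and> 0 \<in> U"
  then obtain F e where Fe: "finite F" "F \<subseteq> G" "0 < e" "{y. \<forall>g\<in>F. norm (g (y - 0)) < e} \<subseteq> U"
    unfolding weak_topology_G_def openin_snt by meson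
  obtain M where M: "\<forall>g\<in>G. \<forall>y\<in>B. norm (g y) \<le> M g" using bd by metis
  define r where "r = 1 + (\<Sum>g\<in>F. \<bar>M g\<bar>) / e"
  have sum0: "(\<Sum>g\<in>F. \<bar>M g\<bar>) \<ge> 0" by (simp add: sum_nonneg)
  have r1: "r \<ge> 1" using sum0 Fe(3) by (simp add: r_def)
  show "\<exists>r>0. \<forall>c. r \<le> norm c \<longrightarrow> B \<subseteq> smul c ` U"
  proof (intro exI conjI allI impI)
    show "r > 0" using r1 by simp
    fix c :: 'k assume c: "r \<le> norm c"
    then have c0: "c \<noteq> 0" using r1 by auto
    show "B \<subseteq> smul c ` U"
    proof
      fix y assume y: "y \<in> B"
      have yeq: "y = smul c (smul (inverse c) y)" using c0 by simp
      have "smul (inverse c) y \<in> U"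
      proof (rule Fe(4)[THEN subsetD], safe)
        fix g assume g: "g \<in> F"
        have gG: "g \<in> G" using g Fe(2) by blast
        have "norm (g (smul (inverse c) y - 0)) = norm (g y) / norm c"
          using dual_facts(2)[OF GD[THEN subsetD, OF gG]] by (simp add: norm_mult norm_inverse divide_inverse mult.commute)
        also have "\<dots> \<le> \<bar>M g\<bar> / norm c"
          using M gG y c0 by (intro divide_right_mono) (auto intro: order_trans[OF _ abs_ge_self])
        also have "\<dots> \<le> (\<Sum>g\<in>F. \<bar>M g\<bar>) / norm c"
          using g Fe(1) c0 by (intro divide_right_mono member_le_sum) auto
        also have "\<dots> < e"
        proof -
          have "(\<Sum>g\<in>F. \<bar>M g\<bar>) < e * r" using Fe(3) sum0 by (simp add: r_def algebra_simps)
          also have "\<dots> \<le> e * norm c" using c Fe(3) by simp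
          finally show ?thesis using c0 by (simp add: divide_less_eq mult.commute)
        qed
        finally show "norm (g (smul (inverse c) y - 0)) < e" .
      qed
      then show "y \<in> smul c ` U" using yeq by blast
    qed
  qed
qed

lemma sep_G0:
  fixes G :: "('e::ab_group_add \<Rightarrow> 'k::real_normed_field) set"
  assumes SM: "semi_montel smul P" and GD: "G \<subseteq> top_dual smul P"
    and DB: "determines_boundedness smul P G" and x0: "\<forall>g\<in>G. g x = 0"
  shows "x = 0"
proof (rule ccontr)
  assume "x \<noteq> 0"
  have LC: "lc_hausdorff smul P" using SM by (simp add: semi_montel_def)
  then obtain i where i: "P i x \<noteq> 0" using \<open>x \<noteq> 0\<close> by (auto simp: lc_hausdorff_def)
  define p where "p = P i x"
  have p: "p > 0" using i sn_facts(2)[OF LC, of i x] by (simp add: p_def)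
  let ?B = "range (\<lambda>d. smul d x)"
  have "vN_bounded smul (weak_topology_G G) ?B"
  proof (rule weak_bdd[OF lc_module[OF LC] GD])
    show "\<forall>g\<in>G. \<exists>M. \<forall>y\<in>?B. norm (g y) \<le> M"
    proof (intro ballI exI[of _ 0])
      fix g y assume g: "g \<in> G" and y: "y \<in> ?B"
      then obtain d where "y = smul d x" by blast
      then show "norm (g y) \<le> 0" using x0 g dual_facts(2)[OF GD[THEN subsetD, OF g]] by simp
    qed
  qed
  then have SB: "vN_bounded smul (seminorm_topology UNIV P) ?B"
    using DB by (simp add: determines_boundedness_def)
  let ?U = "{y. P i y < 1}"
  have "openin (seminorm_topology UNIV P) ?U"
    unfolding openin_snt
  proof
    fix z assume z: "z \<in> ?U"
    have sub: "{y. \<forall>j\<in>{i}. P j (y - z) < 1 - P i z} \<subseteq> ?U"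
    proof (rule subsetI)
      fix y assume "y \<in> {y. \<forall>j\<in>{i}. P j (y - z) < 1 - P i z}"
      then have "P i (y - z) < 1 - P i z" by simp
      then show "y \<in> ?U" using sn_facts(4)[OF LC, of i y z] by simp
    qed
    show "\<exists>F e. finite F \<and> F \<subseteq> UNIV \<and> 0 < e \<and> {y. \<forall>i\<in>F. P i (y - z) < e} \<subseteq> ?U"
    proof (intro exI[of _ "{i}"] exI[of _ "1 - P i z"] conjI)
      show "{y. \<forall>j\<in>{i}. P j (y - z) < 1 - P i z} \<subseteq> ?U" by (rule sub)
    qed (use z in auto)
  qed
  moreover have "0 \<in> ?U" using sn_facts(1)[OF LC] by simp
  ultimately obtain r where r: "r > 0" "\<forall>c. r \<le> norm c \<longrightarrow> ?B \<subseteq> smul c ` ?U"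
    using SB unfolding vN_bounded_def by meson
  have "?B \<subseteq> smul (of_real r) ` ?U" using r(2)[rule_format, of "of_real r"] r(1) by simp
  then have "smul (of_real (2 * r / p)) x \<in> smul (of_real r) ` ?U" by (meson rangeI subsetD)
  then obtain u where u: "P i u < 1" "smul (of_real (2 * r / p)) x = smul (of_real r) u" by auto
  have e1: "P i (smul (of_real (2 * r / p)) x) = norm (of_real (2 * r / p) :: 'k) * p"
    by (simp only: sn_facts(3)[OF LC] p_def)
  have e2: "norm (of_real (2 * r / p) :: 'k) = 2 * r / p" using p r by (simp only: norm_of_real) simp
  have "P i (smul (of_real (2 * r / p)) x) = 2 * r"
    unfolding e1 e2 using p by simp
  moreover have "P i (smul (of_real r) u) < r"
    using sn_facts(3)[OF LC] u r by simp
  ultimately show False using u r by simp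
qed

lemma sep_G:
  fixes G :: "('e::ab_group_add \<Rightarrow> 'k::real_normed_field) set"
  assumes SM: "semi_montel smul P" and GD: "G \<subseteq> top_dual smul P"
    and DB: "determines_boundedness smul P G" and "\<forall>g\<in>G. g x = g y"
  shows "x = y"
proof -
  have "\<forall>g\<in>G. g (x - y) = 0"
  proof
    fix g assume g: "g \<in> G"
    show "g (x - y) = 0" using assms(4) g dual_facts(1)[OF GD[THEN subsetD, OF g]] by simp
  qed
  then have "x - y = 0" by (rule sep_G0[OF SM GD DB])
  then show ?thesis by simp
qed

lemma weak_limit:
  fixes G :: "('e::ab_group_add \<Rightarrow> 'k::real_normed_field) set"
  assumes SM: "semi_montel smul P" and GD: "G \<subseteq> top_dual smul P"
    and DB: "determines_boundedness smul P G"
    and F: "F \<noteq> bot" and ev: "eventually (\<lambda>t. q t \<in> B) F"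
    and bd: "\<forall>g\<in>G. \<exists>M. \<forall>y\<in>B. norm (g y) \<le> M"
    and lim: "\<forall>g\<in>G. ((\<lambda>t. g (q t)) \<longlongrightarrow> L g) F"
  shows "\<exists>l. limitin (seminorm_topology UNIV P) q l F \<and> (\<forall>g\<in>G. g l = L g)"
proof -
  have LC: "lc_hausdorff smul P" using SM by (simp add: semi_montel_def)
  let ?T = "seminorm_topology UNIV P"
  have "vN_bounded smul (weak_topology_G G) B" by (rule weak_bdd[OF lc_module[OF LC] GD bd])
  then have "vN_bounded smul ?T B" using DB by (simp add: determines_boundedness_def)
  then have K: "compactin ?T (?T closure_of B)" using SM by (simp add: semi_montel_def)
  have "B \<subseteq> ?T closure_of B" by (rule closure_of_subset) simp
  then have ev': "eventually (\<lambda>t. q t \<in> ?T closure_of B) F" using ev by (auto elim: eventually_mono)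
  show ?thesis
  proof (rule limit_G[OF K F ev' _ lim])
    show "\<forall>g\<in>G. continuous_map ?T euclidean g" using dual_facts(3) GD by blast
    show "topspace ?T = UNIV" by simp
    show "\<forall>x y. x \<in> topspace ?T \<longrightarrow> y \<in> topspace ?T \<longrightarrow> (\<forall>g\<in>G. g x = g y) \<longrightarrow> x = y"
      using sep_G[OF SM GD DB] by blast
  qed
qed


lemma atin_open:
  assumes "open \<Omega>" "x \<in> \<Omega>"
  shows "atin (top_of_set \<Omega>) x = at x"
proof -
  have "atin (top_of_set \<Omega>) x = atin_within euclidean x \<Omega>"
    using assms by (simp add: atin_subtopology_within)
  also have "\<dots> = at x within \<Omega>"
  proof (rule filter_eqI)
    fix Q
    show "eventually Q (atin_within euclidean x \<Omega>) = eventually Q (at x within \<Omega>)"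
      unfolding eventually_atin_within eventually_at_topological
    proof (intro iffI)
      assume "x \<notin> topspace euclidean \<or> (\<exists>T. openin euclidean T \<and> x \<in> T \<and> (\<forall>y\<in>T. y \<in> \<Omega> \<and> y \<noteq> x \<longrightarrow> Q y))"
      then have "\<exists>T. openin euclidean T \<and> x \<in> T \<and> (\<forall>y\<in>T. y \<in> \<Omega> \<and> y \<noteq> x \<longrightarrow> Q y)" by simp
      then obtain T where T: "openin euclidean T" "x \<in> T" "\<forall>y\<in>T. y \<in> \<Omega> \<and> y \<noteq> x \<longrightarrow> Q y"
        by (elim exE conjE)
      have "open T" using T(1) by simp
      then show "\<exists>S. open S \<and> x \<in> S \<and> (\<forall>y\<in>S. y \<noteq> x \<longrightarrow> y \<in> \<Omega> \<longrightarrow> Q y)"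
        using T by (intro exI[of _ T] conjI) simp_all
    next
      assume "\<exists>S. open S \<and> x \<in> S \<and> (\<forall>y\<in>S. y \<noteq> x \<longrightarrow> y \<in> \<Omega> \<longrightarrow> Q y)"
      then obtain T where T: "open T" "x \<in> T" "\<forall>y\<in>T. y \<noteq> x \<longrightarrow> y \<in> \<Omega> \<longrightarrow> Q y"
        by (elim exE conjE)
      have "openin euclidean T" using T(1) by simp
      then show "x \<notin> topspace euclidean \<or> (\<exists>T. openin euclidean T \<and> x \<in> T \<and> (\<forall>y\<in>T. y \<in> \<Omega> \<and> y \<noteq> x \<longrightarrow> Q y))"
        using T by (intro disjI2 exI[of _ T] conjI) simp_all
    qed
  qed
  also have "\<dots> = at x" by (rule at_within_open[OF assms(2,1)])
  finally show ?thesis .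
qed

lemma ev_line:
  fixes x b :: "'a::euclidean_space"
  assumes "open \<Omega>" "x \<in> \<Omega>"
  shows "eventually (\<lambda>h::real. x + h *\<^sub>R b \<in> \<Omega>) (at 0)"
proof -
  have "((\<lambda>h::real. x + h *\<^sub>R b) \<longlongrightarrow> x + 0 *\<^sub>R b) (at 0)"
    by (intro tendsto_intros)
  then have "((\<lambda>h::real. x + h *\<^sub>R b) \<longlongrightarrow> x) (at 0)" by simp
  then show ?thesis by (rule topological_tendstoD[OF _ assms])
qed

lemma has_partial_cong:
  assumes "open \<Omega>" "x \<in> \<Omega>" "\<forall>y\<in>\<Omega>. f y = f' y"
  shows "has_partial_in T smul f b x l \<longleftrightarrow> has_partial_in T smul f' b x l"
proof -
  have "eventually (\<lambda>h::real. smul (of_real (1 / h)) (f (x + h *\<^sub>R b) - f x)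
          = smul (of_real (1 / h)) (f' (x + h *\<^sub>R b) - f' x)) (at 0)"
    using ev_line[OF assms(1,2), of b] assms by (auto elim: eventually_mono)
  moreover from this have "eventually (\<lambda>h::real. smul (of_real (1 / h)) (f' (x + h *\<^sub>R b) - f' x)
          = smul (of_real (1 / h)) (f (x + h *\<^sub>R b) - f x)) (at 0)"
    by (rule eventually_mono) simp
  ultimately show ?thesis unfolding has_partial_in_def
    using limitin_transform_eventually by (intro iffI) (erule limitin_transform_eventually, assumption)+
qed

lemma Ck_cong:
  assumes "open \<Omega>"
  shows "\<forall>y\<in>\<Omega>. f y = f' y \<Longrightarrow> Ck_on T smul \<Omega> k f \<Longrightarrow> Ck_on T smul \<Omega> k f'"
proof (induction k arbitrary: f f')
  case 0
  have c: "continuous_map (top_of_set \<Omega>) T f" using 0 by simp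
  have "continuous_map (top_of_set \<Omega>) T f'" by (rule continuous_map_eq[OF c]) (use 0 in simp)
  then show ?case by simp
next
  case (Suc k)
  have hp: "\<And>b x l. x \<in> \<Omega> \<Longrightarrow> has_partial_in T smul f b x l \<longleftrightarrow> has_partial_in T smul f' b x l"
    by (rule has_partial_cong[OF assms _ Suc.prems(1)])
  have pe: "\<forall>y\<in>\<Omega>. partial_in T smul f b y = partial_in T smul f' b y" for b
    using hp by (simp add: partial_in_def)
  show ?case
  proof (simp only: Ck_on.simps, rule ballI, rule conjI)
    fix b :: 'a assume b: "b \<in> Basis"
    have pr: "(\<forall>x\<in>\<Omega>. \<exists>l. has_partial_in T smul f b x l) \<and> Ck_on T smul \<Omega> k (partial_in T smul f b)"
      using Suc.prems(2) b by simp
    show "\<forall>x\<in>\<Omega>. \<exists>l. has_partial_in T smul f' b x l" using pr hp by simp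
    show "Ck_on T smul \<Omega> k (partial_in T smul f' b)" using pr Suc.IH[OF pe] by simp
  qed
qed

lemma dual_partial:
  assumes "g \<in> top_dual smul P" "has_partial_in (seminorm_topology UNIV P) smul f b x l"
  shows "has_partial_in euclidean (*) (g \<circ> f) b x (g l)"
proof -
  have "limitin euclidean (g \<circ> (\<lambda>h::real. smul (of_real (1 / h)) (f (x + h *\<^sub>R b) - f x))) (g l) (at 0)"
    using continuous_map_limit[OF dual_facts(3)[OF assms(1)]] assms(2) by (simp add: has_partial_in_def)
  then show ?thesis
    by (simp add: has_partial_in_def o_def dual_facts(1,2)[OF assms(1)])
qed

lemma scalar_partial_unique:
  assumes "has_partial_in euclidean (*) \<phi> b x L"
  shows "partial_in euclidean (*) \<phi> b x = L"
  unfolding partial_in_def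
proof (rule some_equality)
  show "has_partial_in euclidean (*) \<phi> b x L" by (rule assms)
  fix L' assume "has_partial_in euclidean (*) \<phi> b x L'"
  then have 1: "((\<lambda>h::real. of_real (1 / h) * (\<phi> (x + h *\<^sub>R b) - \<phi> x)) \<longlongrightarrow> L') (at 0)"
    by (simp add: has_partial_in_def)
  have 2: "((\<lambda>h::real. of_real (1 / h) * (\<phi> (x + h *\<^sub>R b) - \<phi> x)) \<longlongrightarrow> L) (at 0)"
    using assms by (simp add: has_partial_in_def)
  show "L' = L" using tendsto_unique[OF trivial_limit_at 1 2] .
qed


lemma cont_case:
  fixes G :: "('e::ab_group_add \<Rightarrow> 'k::real_normed_field) set" and f :: "'a::euclidean_space \<Rightarrow> 'e"
  assumes SM: "semi_montel smul P" and GD: "G \<subseteq> top_dual smul P"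
    and DB: "determines_boundedness smul P G" and op: "open \<Omega>"
    and wc: "\<forall>g\<in>G. continuous_on \<Omega> (g \<circ> f)"
  shows "continuous_map (top_of_set \<Omega>) (seminorm_topology UNIV P) f"
proof -
  have "\<forall>x\<in>\<Omega>. limitin (seminorm_topology UNIV P) f (f x) (at x)"
  proof
    fix x assume x: "x \<in> \<Omega>"
    obtain e where e: "e > 0" "cball x e \<subseteq> \<Omega>" using open_contains_cball op x by blast
    have ev: "eventually (\<lambda>y. f y \<in> f ` cball x e) (at x)"
      unfolding eventually_at_topological
    proof (intro exI[of _ "ball x e"] conjI ballI impI)
      show "open (ball x e)" by simp
      show "x \<in> ball x e" using e by simp
      fix y assume "y \<in> ball x e"
      then show "f y \<in> f ` cball x e" by (intro imageI) simp
    qed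
    have bd: "\<forall>g\<in>G. \<exists>M. \<forall>y\<in>f ` cball x e. norm (g y) \<le> M"
    proof
      fix g assume g: "g \<in> G"
      have "compact ((g \<circ> f) ` cball x e)"
        by (rule compact_continuous_image[OF continuous_on_subset[OF wc[rule_format, OF g] e(2)] compact_cball])
      then obtain M where "\<forall>z\<in>(g \<circ> f) ` cball x e. norm z \<le> M"
        using compact_imp_bounded bounded_iff by metis
      then show "\<exists>M. \<forall>y\<in>f ` cball x e. norm (g y) \<le> M" by auto
    qed
    have lim: "\<forall>g\<in>G. ((\<lambda>y. g (f y)) \<longlongrightarrow> g (f x)) (at x)"
    proof
      fix g assume g: "g \<in> G"
      have "isCont (g \<circ> f) x"
        using wc g op x continuous_on_eq_continuous_at by blast
      then show "((\<lambda>y. g (f y)) \<longlongrightarrow> g (f x)) (at x)" by (simp add: isCont_def o_def)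
    qed
    obtain l where l: "limitin (seminorm_topology UNIV P) f l (at x)" "\<forall>g\<in>G. g l = g (f x)"
      using weak_limit[OF SM GD DB at_neq_bot ev bd lim] by blast
    have "l = f x" using sep_G[OF SM GD DB l(2)] .
    then show "limitin (seminorm_topology UNIV P) f (f x) (at x)" using l(1) by simp
  qed
  then show ?thesis
    unfolding continuous_map_atin using atin_open[OF op] by simp
qed


lemma line_cont:
  fixes \<phi> :: "real \<Rightarrow> 'k::real_normed_field"
  assumes "((\<lambda>t::real. of_real (1 / t) * (\<phi> (h + t) - \<phi> h)) \<longlongrightarrow> L) (at 0)"
  shows "isCont \<phi> h"
proof -
  have "((\<lambda>t::real. of_real t * (of_real (1 / t) * (\<phi> (h + t) - \<phi> h))) \<longlongrightarrow> of_real 0 * L) (at 0)"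
    by (intro tendsto_mult tendsto_of_real assms tendsto_ident_at)
  then have a: "((\<lambda>t::real. of_real t * (of_real (1 / t) * (\<phi> (h + t) - \<phi> h))) \<longlongrightarrow> 0) (at 0)" by simp
  have "eventually (\<lambda>t::real. of_real t * (of_real (1 / t) * (\<phi> (h + t) - \<phi> h)) = \<phi> (h + t) - \<phi> h) (at 0)"
  proof -
    have "eventually (\<lambda>t::real. t \<noteq> 0) (at 0)" by (simp add: eventually_at_filter)
    then show ?thesis
    proof (rule eventually_mono)
      fix t :: real assume t: "t \<noteq> 0"
      have "(of_real t :: 'k) * of_real (1 / t) = of_real (t * (1 / t))" by simp
      also have "\<dots> = 1" using t by simp
      finally show "of_real t * (of_real (1 / t) * (\<phi> (h + t) - \<phi> h)) = \<phi> (h + t) - \<phi> h"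
        by (simp add: mult.assoc[symmetric])
    qed
  qed
  then have "((\<lambda>t::real. \<phi> (h + t) - \<phi> h) \<longlongrightarrow> 0) (at 0)" using a by (rule Lim_transform_eventually[rotated]) 
  then have "((\<lambda>t::real. \<phi> (h + t)) \<longlongrightarrow> \<phi> h) (at 0)" by (rule LIM_zero_cancel)
  then show ?thesis unfolding isCont_def by (simp add: LIM_offset_zero_iff)
qed


lemma partial_exists:
  fixes G :: "('e::ab_group_add \<Rightarrow> 'k::real_normed_field) set" and f :: "'a::euclidean_space \<Rightarrow> 'e"
  assumes SM: "semi_montel smul P" and GD: "G \<subseteq> top_dual smul P"
    and DB: "determines_boundedness smul P G" and op: "open \<Omega>"
    and x: "x \<in> \<Omega>" and b: "norm b = 1"
    and wp: "\<forall>g\<in>G. \<forall>y\<in>\<Omega>. \<exists>L. has_partial_in euclidean (*) (g \<circ> f) b y L"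
  shows "\<exists>l. has_partial_in (seminorm_topology UNIV P) smul f b x l"
proof -
  obtain e where e: "e > 0" "ball x e \<subseteq> \<Omega>" using open_contains_ball op x by blast
  define \<delta> where "\<delta> = e / 2"
  have \<delta>: "\<delta> > 0" using e by (simp add: \<delta>_def)
  have line: "x + h *\<^sub>R b \<in> \<Omega>" if "\<bar>h\<bar> \<le> \<delta>" for h
  proof -
    have "dist x (x + h *\<^sub>R b) = \<bar>h\<bar>" using b by (simp add: dist_norm)
    also have "\<dots> < e" using that e by (simp add: \<delta>_def)
    finally show ?thesis using e(2) by auto
  qed
  define q where "q = (\<lambda>h::real. smul (of_real (1 / h)) (f (x + h *\<^sub>R b) - f x))"
  define S where "S = {h::real. h \<noteq> 0 \<and> \<bar>h\<bar> \<le> \<delta>}"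
  have gq: "g (q h) = of_real (1 / h) * (g (f (x + h *\<^sub>R b)) - g (f x))" if g: "g \<in> G" for g h
    using dual_facts(1,2)[OF GD[THEN subsetD, OF g]] by (simp add: q_def)
  obtain L where L: "\<forall>g\<in>G. has_partial_in euclidean (*) (g \<circ> f) b x (L g)"
  proof -
    have "\<forall>g\<in>G. \<exists>L. has_partial_in euclidean (*) (g \<circ> f) b x L" using wp x by simp
    from bchoice[OF this] show ?thesis using that by blast
  qed
  have lim: "\<forall>g\<in>G. ((\<lambda>h. g (q h)) \<longlongrightarrow> L g) (at 0)"
  proof
    fix g assume g: "g \<in> G"
    then show "((\<lambda>h. g (q h)) \<longlongrightarrow> L g) (at 0)"
      using L by (simp add: has_partial_in_def o_def gq)
  qed
  have ev: "eventually (\<lambda>h. q h \<in> q ` S) (at 0)"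
    unfolding eventually_at
  proof (intro exI[of _ \<delta>] conjI ballI impI)
    show "\<delta> > 0" by (rule \<delta>)
    fix h :: real assume "h \<in> UNIV" "h \<noteq> 0 \<and> dist h 0 < \<delta>"
    then have "h \<in> S" by (simp add: S_def)
    then show "q h \<in> q ` S" by (rule imageI)
  qed
  have bd: "\<forall>g\<in>G. \<exists>M. \<forall>y\<in>q ` S. norm (g y) \<le> M"
  proof
    fix g assume g: "g \<in> G"
    define \<phi> where "\<phi> = (\<lambda>h::real. g (f (x + h *\<^sub>R b)))"
    have cont: "continuous_on {-\<delta>..\<delta>} \<phi>"
    proof (rule continuous_at_imp_continuous_on, rule ballI)
      fix h assume h: "h \<in> {-\<delta>..\<delta>}"
      then have "\<bar>h\<bar> \<le> \<delta>" by auto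
      then have "x + h *\<^sub>R b \<in> \<Omega>" by (rule line)
      then obtain L' where "has_partial_in euclidean (*) (g \<circ> f) b (x + h *\<^sub>R b) L'"
        using wp g by blast
      then have "((\<lambda>t::real. of_real (1 / t) * (\<phi> (h + t) - \<phi> h)) \<longlongrightarrow> L') (at 0)"
        by (simp add: has_partial_in_def \<phi>_def o_def scaleR_add_left add.assoc)
      then show "isCont \<phi> h" by (rule line_cont)
    qed
    have "compact (\<phi> ` {-\<delta>..\<delta>})" by (rule compact_continuous_image[OF cont compact_Icc])
    then obtain M1 where M1: "\<forall>z\<in>\<phi> ` {-\<delta>..\<delta>}. norm z \<le> M1"
      using compact_imp_bounded bounded_iff by metis
    have M1': "norm (\<phi> h) \<le> M1" if "\<bar>h\<bar> \<le> \<delta>" for h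
    proof -
      have "h \<in> {-\<delta>..\<delta>}" using that by auto
      then show ?thesis using M1 by simp
    qed
    have M10: "M1 \<ge> 0" using M1'[of 0] \<delta> by (auto intro: order_trans[OF norm_ge_zero])
    have "((\<lambda>h. norm (g (q h))) \<longlongrightarrow> norm (L g)) (at 0)" using lim g by (simp add: tendsto_norm)
    then have "eventually (\<lambda>h. norm (g (q h)) < norm (L g) + 1) (at 0)"
      by (rule order_tendstoD(2)) simp
    then obtain d where d: "d > 0" "\<forall>h\<in>UNIV. h \<noteq> 0 \<and> dist h 0 < d \<longrightarrow> norm (g (q h)) < norm (L g) + 1"
      unfolding eventually_at by blast
    show "\<exists>M. \<forall>y\<in>q ` S. norm (g y) \<le> M"
    proof (intro exI[of _ "norm (L g) + 1 + 2 * M1 / d"] ballI)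
      fix y assume "y \<in> q ` S"
      then obtain h where h: "y = q h" "h \<noteq> 0" "\<bar>h\<bar> \<le> \<delta>" by (auto simp: S_def)
      have pos: "2 * M1 / d \<ge> 0" using M10 d by simp
      show "norm (g y) \<le> norm (L g) + 1 + 2 * M1 / d"
      proof (cases "\<bar>h\<bar> < d")
        case True
        then have "norm (g (q h)) < norm (L g) + 1" using d h by simp
        then show ?thesis using h pos by simp
      next
        case False
        have eq: "g (q h) = of_real (1 / h) * (\<phi> h - \<phi> 0)" using gq[OF g] by (simp add: \<phi>_def)
        have "norm (g (q h)) = norm (\<phi> h - \<phi> 0) / \<bar>h\<bar>"
          unfolding eq by (simp add: norm_mult norm_divide)
        also have "\<dots> \<le> (2 * M1) / \<bar>h\<bar>"
        proof (rule divide_right_mono)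
          have "norm (\<phi> h - \<phi> 0) \<le> norm (\<phi> h) + norm (\<phi> 0)" by (rule norm_triangle_ineq4)
          also have "\<dots> \<le> 2 * M1" using M1'[of h] M1'[of 0] h \<delta> by simp
          finally show "norm (\<phi> h - \<phi> 0) \<le> 2 * M1" .
        qed simp
        also have "\<dots> \<le> 2 * M1 / d"
          using False d M10 by (intro divide_left_mono) auto
        finally have "norm (g (q h)) \<le> 2 * M1 / d" .
        moreover have "norm (L g) + 1 \<ge> 0" by (simp add: add_nonneg_nonneg)
        ultimately have "norm (g (q h)) \<le> norm (L g) + 1 + 2 * M1 / d" by linarith
        then show ?thesis using h by simp
      qed
    qed
  qed
  obtain l where "limitin (seminorm_topology UNIV P) q l (at 0)"
    using weak_limit[OF SM GD DB at_neq_bot ev bd lim] by blast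
  then show ?thesis unfolding has_partial_in_def q_def by blast
qed


theorem mainTheorem12:
  fixes smul :: "'k::real_normed_field \<Rightarrow> 'e::ab_group_add \<Rightarrow> 'e"
    and P :: "'i \<Rightarrow> 'e \<Rightarrow> real"
    and G :: "('e \<Rightarrow> 'k) set"
    and \<Omega> :: "'a::euclidean_space set"
    and k :: nat
    and f :: "'a \<Rightarrow> 'e"
  assumes "semi_montel smul P"
    and "G \<subseteq> top_dual smul P"
    and "linear_subspace_fun G"
    and "determines_boundedness smul P G"
    and "open \<Omega>"
    and "\<forall>e'\<in>G. Ck_scalar \<Omega> k (e' \<circ> f)"
  shows "Ck_on (seminorm_topology UNIV P) smul \<Omega> k f"
proof -
  note SM = assms(1) and GD = assms(2) and DB = assms(4) and op = assms(5)
  have "\<forall>f :: 'a \<Rightarrow> 'e. (\<forall>e'\<in>G. Ck_scalar \<Omega> k (e' \<circ> f)) \<longrightarrow> Ck_on (seminorm_topology UNIV P) smul \<Omega> k f"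
  proof (induction k)
    case 0
    show ?case
    proof (intro allI impI)
      fix f :: "'a \<Rightarrow> 'e" assume H: "\<forall>e'\<in>G. Ck_scalar \<Omega> 0 (e' \<circ> f)"
      have "\<forall>g\<in>G. continuous_on \<Omega> (g \<circ> f)" using H by simp
      then have "continuous_map (top_of_set \<Omega>) (seminorm_topology UNIV P) f"
        by (rule cont_case[OF SM GD DB op])
      then show "Ck_on (seminorm_topology UNIV P) smul \<Omega> 0 f" by simp
    qed
  next
    case (Suc k)
    show ?case
    proof (intro allI impI)
      fix f :: "'a \<Rightarrow> 'e" assume H: "\<forall>e'\<in>G. Ck_scalar \<Omega> (Suc k) (e' \<circ> f)"
      show "Ck_on (seminorm_topology UNIV P) smul \<Omega> (Suc k) f"
      proof (simp only: Ck_on.simps, rule ballI, rule conjI)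
        fix b :: 'a assume b: "b \<in> Basis"
        have H': "\<forall>g\<in>G. (\<forall>x\<in>\<Omega>. \<exists>l. has_partial_in euclidean (*) (g \<circ> f) b x l)
                      \<and> Ck_scalar \<Omega> k (partial_in euclidean (*) (g \<circ> f) b)"
          using H b by simp
        have wp: "\<forall>g\<in>G. \<forall>y\<in>\<Omega>. \<exists>L. has_partial_in euclidean (*) (g \<circ> f) b y L"
          using H' by blast
        have nb: "norm b = 1" using b by simp
        show p1: "\<forall>x\<in>\<Omega>. \<exists>l. has_partial_in (seminorm_topology UNIV P) smul f b x l"
        proof
          fix x assume x: "x \<in> \<Omega>"
          show "\<exists>l. has_partial_in (seminorm_topology UNIV P) smul f b x l"
            by (rule partial_exists[OF SM GD DB op x nb wp])
        qed
        have "\<forall>g\<in>G. Ck_scalar \<Omega> k (g \<circ> partial_in (seminorm_topology UNIV P) smul f b)"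
        proof
          fix g assume g: "g \<in> G"
          have eq: "\<forall>y\<in>\<Omega>. partial_in euclidean (*) (g \<circ> f) b y
                        = (g \<circ> partial_in (seminorm_topology UNIV P) smul f b) y"
          proof
            fix y assume y: "y \<in> \<Omega>"
            have "has_partial_in (seminorm_topology UNIV P) smul f b y
                     (partial_in (seminorm_topology UNIV P) smul f b y)"
              unfolding partial_in_def using p1 y by (metis someI_ex)
            then have "has_partial_in euclidean (*) (g \<circ> f) b y
                     (g (partial_in (seminorm_topology UNIV P) smul f b y))"
              by (rule dual_partial[OF GD[THEN subsetD, OF g]])
            then show "partial_in euclidean (*) (g \<circ> f) b y
                        = (g \<circ> partial_in (seminorm_topology UNIV P) smul f b) y"
              by (simp add: scalar_partial_unique)
          qed
          show "Ck_scalar \<Omega> k (g \<circ> partial_in (seminorm_topology UNIV P) smul f b)"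
            by (rule Ck_cong[OF op eq]) (use H' g in blast)
        qed
        then show "Ck_on (seminorm_topology UNIV P) smul \<Omega> k (partial_in (seminorm_topology UNIV P) smul f b)"
          using Suc.IH by blast
      qed
    qed
  qed
  then show ?thesis using assms(6) by blast
qed

end
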